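(* Let $0\le\mu<L<+\infty$, $N\ge1$, $R\ge0$, let $H=\{h_{i,k}\}$ define a fixed-step method with $N$ steps, and let $b\in\mathbb{R}^{N+1}$, $C\in\mathbb{S}^{N+2}$. Then the supremum defining $w^{sdp}_{\mu,L}(R,H,N,b,C)$ is finite and attained by some feasible $(G,f)$.
   Context: Fixed-step method with $N$ steps: scalars $h_{i,k}$ for $1\le i\le N$, $0\le k\le N-1$, with $h_{i,k}=0$ for $k\ge i$ (a lower-triangular $H\in\mathbb{R}^{N\times N}$). Let $I=\{0,1,\dots,N,*\}$ and $e_1,\dots,e_{N+2}$ the standard basis of $\mathbb{R}^{N+2}$. For $i=0,\dots,N$ let $h_i=(-h_{i,0},\dots,-h_{i,i-1},0,\dots,0,1)^{\top}\in\mathbb{R}^{N+2}$ (last entry $1$) and $u_i=e_{i+1}$; let $h_*=u_*=0$. For $i,j\in I$ define the symmetric matrix $A_{ij}$ by $2A_{ij}=\frac{L}{L-\mu}\big(u_j(h_i-h_j)^{\top}+(h_i-h_j)u_j^{\top}\big)+\frac{1}{L-\mu}(u_i-u_j)(u_i-u_j)^{\top}+\frac{\mu}{L-\mu}\big(u_i(h_j-h_i)^{\top}+(h_j-h_i)u_i^{\top}\big)+\frac{L\mu}{L-\mu}(h_i-h_j)(h_i-h_j)^{\top}$, and $A_R=e_{N+2}e_{N+2}^{\top}$. Then $w^{sdp}_{\mu,L}(R,H,N,b,C)$ is the supremum of $b^{\top}f+\mathrm{Tr}(CG)$ over $G\in\mathbb{S}^{N+2}$ (symmetric matrices), $f=(f_0,\dots,f_N)\in\mathbb{R}^{N+1}$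 subject to $f_j-f_i+\mathrm{Tr}(GA_{ij})\le0$ for all $i,j\in I$ (with $f_*:=0$), $\mathrm{Tr}(GA_R)\le R^2$, and $G\succeq0$. *)

theory Defs
  imports Complex_Main
begin

text \<open>Matrices in S^(N+2) and vectors in R^(N+2) are represented by
functions on nat, with 0-based indices 0..N+1 (index p here corresponds to e_(p+1)).
The index set I = {0,...,N,*} is rendered as nat option: Some i for i, None for *.\<close>

definition idx :: "nat \<Rightarrow> nat option set" where
  "idx N = insert None (Some ` {..N})"

definition hvec :: "nat \<Rightarrow> (nat \<Rightarrow> nat \<Rightarrow> real) \<Rightarrow> nat option \<Rightarrow> nat \<Rightarrow> real" where
  "hvec N H i p = (case i of None \<Rightarrow> 0
     | Some j \<Rightarrow> if p = N + 1 then 1 else if p < j then - H j p else 0)"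

definition uvec :: "nat option \<Rightarrow> nat \<Rightarrow> real" where
  "uvec i p = (case i of None \<Rightarrow> 0 | Some j \<Rightarrow> if p = j then 1 else 0)"

definition Amat :: "real \<Rightarrow> real \<Rightarrow> nat \<Rightarrow> (nat \<Rightarrow> nat \<Rightarrow> real) \<Rightarrow> nat option \<Rightarrow> nat option
    \<Rightarrow> nat \<Rightarrow> nat \<Rightarrow> real" where
  "Amat \<mu> L N H i j p q = (1/2) *
     ( L / (L - \<mu>) * (uvec j p * (hvec N H i q - hvec N H j q) + (hvec N H i p - hvec N H j p) * uvec j q)
     + 1 / (L - \<mu>) * ((uvec i p - uvec j p) * (uvec i q - uvec j q))
     + \<mu> / (L - \<mu>) * (uvec i p * (hvec N H j q - hvec N H i q) + (hvec N H j p - hvec N H i p) * uvec i q)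
     + L * \<mu> / (L - \<mu>) * ((hvec N H i p - hvec N H j p) * (hvec N H i q - hvec N H j q)))"

definition AR :: "nat \<Rightarrow> nat \<Rightarrow> nat \<Rightarrow> real" where
  "AR N p q = (if p = N + 1 \<and> q = N + 1 then 1 else 0)"

definition trprod :: "nat \<Rightarrow> (nat \<Rightarrow> nat \<Rightarrow> real) \<Rightarrow> (nat \<Rightarrow> nat \<Rightarrow> real) \<Rightarrow> real" where
  "trprod N X Y = (\<Sum>p<N+2. \<Sum>q<N+2. X p q * Y q p)"

definition symm :: "nat \<Rightarrow> (nat \<Rightarrow> nat \<Rightarrow> real) \<Rightarrow> bool" where
  "symm n X = (\<forall>p<n. \<forall>q<n. X p q = X q p)"

definition psd :: "nat \<Rightarrow> (nat \<Rightarrow> nat \<Rightarrow> real) \<Rightarrow> bool" where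
  "psd n X = (symm n X \<and> (\<forall>x :: nat \<Rightarrow> real. 0 \<le> (\<Sum>p<n. \<Sum>q<n. x p * X p q * x q)))"

definition fval :: "(nat \<Rightarrow> real) \<Rightarrow> nat option \<Rightarrow> real" where
  "fval f i = (case i of None \<Rightarrow> 0 | Some j \<Rightarrow> f j)"

definition sdp_feasible :: "real \<Rightarrow> real \<Rightarrow> real \<Rightarrow> (nat \<Rightarrow> nat \<Rightarrow> real) \<Rightarrow> nat
    \<Rightarrow> (nat \<Rightarrow> nat \<Rightarrow> real) \<Rightarrow> (nat \<Rightarrow> real) \<Rightarrow> bool" where
  "sdp_feasible \<mu> L R H N G f =
     (psd (N + 2) G
      \<and> (\<forall>i\<in>idx N. \<forall>j\<in>idx N. fval f j - fval f i + trprod N G (Amat \<mu> L N H i j) \<le> 0)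
      \<and> trprod N G (AR N) \<le> R\<^sup>2)"

definition sdp_obj :: "nat \<Rightarrow> (nat \<Rightarrow> real) \<Rightarrow> (nat \<Rightarrow> nat \<Rightarrow> real)
    \<Rightarrow> (nat \<Rightarrow> nat \<Rightarrow> real) \<Rightarrow> (nat \<Rightarrow> real) \<Rightarrow> real" where
  "sdp_obj N b C G f = (\<Sum>i\<le>N. b i * f i) + trprod N C G"

end

theory Submission imports Defs "HOL-Analysis.Analysis" begin

definition qf :: "nat \<Rightarrow> (nat\<Rightarrow>nat\<Rightarrow>real) \<Rightarrow> (nat\<Rightarrow>real) \<Rightarrow> real" where
  "qf n G v = (\<Sum>p<n. \<Sum>q<n. v p * G p q * v q)"
definition bf :: "nat \<Rightarrow> (nat\<Rightarrow>nat\<Rightarrow>real) \<Rightarrow> (nat\<Rightarrow>real) \<Rightarrow> (nat\<Rightarrow>real) \<Rightarrow> real" where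
  "bf n G v w = (\<Sum>p<n. \<Sum>q<n. v p * G p q * w q)"

lemma qf_bf: "qf n G v = bf n G v v" by (simp add: qf_def bf_def)

lemma qf_expand: "qf n G (\<lambda>p. a * v p + b * w p) =
   a^2 * qf n G v + a*b * bf n G v w + a*b*bf n G w v + b^2 * qf n G w"
proof -
  have "\<And>p q. (a * v p + b * w p) * G p q * (a * v q + b * w q) =
     a^2 * (v p * G p q * v q) + a*b * (v p * G p q * w q) + a*b*(w p * G p q * v q) + b^2 * (w p * G p q * w q)"
    by (simp add: algebra_simps power2_eq_square)
  then show ?thesis by (simp add: qf_def bf_def sum.distrib sum_distrib_left)
qed

lemma bf_sym: "symm n G \<Longrightarrow> bf n G v w = bf n G w v"
  unfolding bf_def symm_def
  by (subst sum.swap) (auto intro!: sum.cong simp: mult.commute mult.left_commute)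

lemma tr4: "trprod N G (\<lambda>p q. c1*(g p*g q) + c2*(g p*x q) + c3*(x p*g q)+c4*(x p*x q))
   = c1*bf (N+2) G g g + c2*bf (N+2) G x g + c3*bf (N+2) G g x + c4*bf (N+2) G x x"
proof -
  have "\<And>p q. G p q * (c1*(g q*g p) + c2*(g q*x p) + c3*(x q*g p)+c4*(x q*x p)) =
    c1*(g p * G p q * g q) + c2*(x p * G p q * g q) + c3 * (g p * G p q * x q) + c4 * (x p * G p q * x q)"
    by (simp add: algebra_simps)
  then show ?thesis unfolding trprod_def bf_def by (simp only: sum.distrib sum_distrib_left)
qed

lemma hvec_None[simp]: "hvec N H None p = 0" by (simp add: hvec_def)
lemma uvec_None[simp]: "uvec None p = 0" by (simp add: uvec_def)

lemma Amat_iN: assumes "\<mu> < L" shows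
  "Amat \<mu> L N H (Some i) None = (\<lambda>p q. (1/(2*(L-\<mu>)))*(uvec (Some i) p*uvec (Some i) q)
     + (-\<mu>/(2*(L-\<mu>)))*(uvec (Some i) p*hvec N H (Some i) q) + (-\<mu>/(2*(L-\<mu>)))*(hvec N H (Some i) p*uvec (Some i) q)
     + (L*\<mu>/(2*(L-\<mu>)))*(hvec N H (Some i) p*hvec N H (Some i) q))"
proof -
  have ne: "L - \<mu> \<noteq> 0" using assms by simp
  show ?thesis
    using ne by (intro ext) (simp add: Amat_def divide_simps; simp add: algebra_simps)
qed

lemma Amat_Ni: assumes "\<mu> < L" shows
  "Amat \<mu> L N H None (Some i) = (\<lambda>p q. (1/(2*(L-\<mu>)))*(uvec (Some i) p*uvec (Some i) q)
     + (-L/(2*(L-\<mu>)))*(uvec (Some i) p*hvec N H (Some i) q) + (-L/(2*(L-\<mu>)))*(hvec N H (Some i) p*uvec (Some i) q)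
     + (L*\<mu>/(2*(L-\<mu>)))*(hvec N H (Some i) p*hvec N H (Some i) q))"
proof -
  have ne: "L - \<mu> \<noteq> 0" using assms by simp
  show ?thesis
    using ne by (intro ext) (simp add: Amat_def divide_simps; simp add: algebra_simps)
qed

lemma comb4: "(D::real) \<noteq> 0 \<Longrightarrow> (1/D)*a + (-c/D)*b + (-c/D)*b + (e/D)*x = (a - 2*c*b + e*x)/D"
  by (simp add: field_simps)

lemma psd_qf: "psd n G \<Longrightarrow> 0 \<le> qf n G v"
  by (simp add: psd_def qf_def)

lemma key:
  assumes feas: "sdp_feasible \<mu> L R H N G f" and mu: "0 \<le> \<mu>" "\<mu> < L" and i: "i \<le> N"
  shows "0 \<le> f i \<and> f i \<le> L/2 * qf (N+2) G (hvec N H (Some i))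
     \<and> qf (N+2) G (uvec (Some i)) \<le> (L+\<mu>)^2 * qf (N+2) G (hvec N H (Some i))"
proof -
  define g where "g = uvec (Some i)"
  define x where "x = hvec N H (Some i)"
  define B where "B = bf (N+2) G g x"
  define qg where "qg = qf (N+2) G g"
  define qx where "qx = qf (N+2) G x"
  have psd: "psd (N+2) G" using feas by (simp add: sdp_feasible_def)
  hence sym: "symm (N+2) G" by (simp add: psd_def)
  have pos: "\<And>v. 0 \<le> qf (N+2) G v" using psd psd_qf by blast
  have ii: "Some i \<in> idx N" "None \<in> idx N" using i by (auto simp: idx_def)
  have c1: "- f i + trprod N G (Amat \<mu> L N H (Some i) None) \<le> 0"
    using feas ii by (force simp: sdp_feasible_def fval_def)
  have c2: "f i + trprod N G (Amat \<mu> L N H None (Some i)) \<le> 0"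
    using feas ii by (force simp: sdp_feasible_def fval_def)
  have bs: "bf (N+2) G x g = B" using bf_sym[OF sym] by (simp add: B_def)
  have t1: "trprod N G (Amat \<mu> L N H (Some i) None) =
     (1/(2*(L-\<mu>)))*qg + (-\<mu>/(2*(L-\<mu>)))*B + (-\<mu>/(2*(L-\<mu>)))*B + (L*\<mu>/(2*(L-\<mu>)))*qx"
    unfolding Amat_iN[OF mu(2)] tr4 using bs by (simp add: B_def qg_def qx_def qf_bf g_def x_def)
  have t2: "trprod N G (Amat \<mu> L N H None (Some i)) =
     (1/(2*(L-\<mu>)))*qg + (-L/(2*(L-\<mu>)))*B + (-L/(2*(L-\<mu>)))*B + (L*\<mu>/(2*(L-\<mu>)))*qx"
    unfolding Amat_Ni[OF mu(2)] tr4 using bs by (simp add: B_def qg_def qx_def qf_bf g_def x_def)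
  have d: "L - \<mu> > 0" using mu by simp
  have e1: "qg - 2*\<mu>*B + L*\<mu>*qx \<le> 2*(L-\<mu>)*f i"
  proof -
    have "trprod N G (Amat \<mu> L N H (Some i) None) = (qg - 2*\<mu>*B + L*\<mu>*qx) / (2*(L-\<mu>))"
      unfolding t1 by (rule comb4) (use d in simp)
    then have "(qg - 2*\<mu>*B + L*\<mu>*qx) / (2*(L-\<mu>)) \<le> f i" using c1 by linarith
    then show ?thesis using d by (simp add: divide_simps mult.commute)
  qed
  have e2: "2*(L-\<mu>)*f i \<le> 2*L*B - qg - L*\<mu>*qx"
  proof -
    have "trprod N G (Amat \<mu> L N H None (Some i)) = (qg - 2*L*B + L*\<mu>*qx) / (2*(L-\<mu>))"
      unfolding t2 by (rule comb4) (use d in simp)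
    then have "f i \<le> - ((qg - 2*L*B + L*\<mu>*qx) / (2*(L-\<mu>)))" using c2 by linarith
    then have "2*(L-\<mu>)*f i \<le> 2*(L-\<mu>) * (- ((qg - 2*L*B + L*\<mu>*qx) / (2*(L-\<mu>))))"
      by (rule mult_left_mono) (use d in auto)
    also have "\<dots> = 2*L*B - qg - L*\<mu>*qx" using d by simp
    finally show ?thesis .
  qed
  have cs: "\<And>c. 0 \<le> qg - 2*c*B + c^2*qx"
  proof -
    fix c
    have "0 \<le> qf (N+2) G (\<lambda>p. 1 * g p + (-c) * x p)" by (rule pos)
    also have "\<dots> = qg - 2*c*B + c^2*qx" unfolding qf_expand using bs
      by (simp add: qg_def qx_def B_def power2_eq_square)
    finally show "0 \<le> qg - 2*c*B + c^2*qx" .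
  qed
  have qx0: "0 \<le> qx" "0 \<le> qg" using pos by (auto simp: qx_def qg_def)
  have sm: "0 \<le> qg - 2*\<mu>*B + \<mu>^2*qx" by (rule cs)
  have sL: "0 \<le> qg - 2*L*B + L^2*qx" by (rule cs)
  have sLm: "0 \<le> qg - 2*(L+\<mu>)*B + (L+\<mu>)^2*qx" by (rule cs)
  have f0: "0 \<le> f i"
  proof -
    have "\<mu>*(L-\<mu>)*qx \<le> 2*(L-\<mu>)*f i" using e1 sm
      by (simp add: algebra_simps power2_eq_square)
    moreover have "0 \<le> \<mu>*(L-\<mu>)*qx" using mu qx0 d by simp
    ultimately have "0 \<le> (L-\<mu>)*f i" by linarith
    then show ?thesis using d by (simp add: zero_le_mult_iff)
  qed
  have f1: "f i \<le> L/2 * qx"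
  proof -
    have "2*(L-\<mu>)*f i \<le> L*(L-\<mu>)*qx" using e2 sL
      by (simp add: algebra_simps power2_eq_square)
    then have "(L-\<mu>)*(2*f i) \<le> (L-\<mu>)*(L*qx)" by (simp add: algebra_simps)
    then have "2*f i \<le> L*qx" using d by simp
    then show ?thesis by simp
  qed
  have g1: "qg \<le> (L+\<mu>)^2 * qx"
  proof -
    have "2*qg - 2*(L+\<mu>)*B + 2*L*\<mu>*qx \<le> 0" using e1 e2 by (simp add: algebra_simps)
    moreover have "0 \<le> L*\<mu>*qx" using mu qx0 d by simp
    ultimately show ?thesis using sLm by linarith
  qed
  show ?thesis using f0 f1 g1 by (simp add: qg_def qx_def g_def x_def)
qed

lemma qf_add_le: assumes "psd n G"
  shows "qf n G (\<lambda>p. v p + w p) \<le> 2 * qf n G v + 2 * qf n G w"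
proof -
  have a: "qf n G (\<lambda>p. v p + w p) = qf n G v + bf n G v w + bf n G w v + qf n G w"
    using qf_expand[of n G 1 v 1 w] by simp
  have "0 \<le> qf n G (\<lambda>p. 1 * v p + (-1) * w p)" using assms psd_qf by blast
  also have "\<dots> = qf n G v - bf n G v w - bf n G w v + qf n G w"
    unfolding qf_expand by simp
  finally show ?thesis using a by linarith
qed

lemma qf_scale: "qf n G (\<lambda>p. c * v p) = c^2 * qf n G v"
  using qf_expand[of n G c v 0 v] by simp

lemma qf_sum: assumes "psd n G"
  shows "qf n G (\<lambda>p. \<Sum>k<m. vs k p) \<le> 2^m * (\<Sum>k<m. qf n G (vs k))"
proof (induction m)
  case 0
  then show ?case by (simp add: qf_def)
next
  case (Suc m)
  have "qf n G (\<lambda>p. \<Sum>k<Suc m. vs k p) = qf n G (\<lambda>p. (\<Sum>k<m. vs k p) + vs m p)" by simp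
  also have "\<dots> \<le> 2 * qf n G (\<lambda>p. \<Sum>k<m. vs k p) + 2 * qf n G (vs m)"
    by (rule qf_add_le[OF assms])
  also have "\<dots> \<le> 2 * (2^m * (\<Sum>k<m. qf n G (vs k))) + 2 * qf n G (vs m)" using Suc by simp
  also have "\<dots> \<le> 2^Suc m * (\<Sum>k<Suc m. qf n G (vs k))"
  proof -
    have q0: "0 \<le> qf n G (vs m)" using assms psd_qf by blast
    have "(1::real) \<le> 2^m" by simp
    then have "2 * qf n G (vs m) \<le> 2 * 2^m * qf n G (vs m)" using q0
      by (simp add: mult_right_mono)
    then show ?thesis by (simp add: algebra_simps)
  qed
  finally show ?case .
qed

lemma qf_e: "a < n \<Longrightarrow> qf n G (\<lambda>p. if p = a then 1 else 0) = G a a"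
proof -
  assume "a < n"
  have "\<And>p q. (if p=a then 1 else 0)*G p q*(if q = a then 1 else 0) = (if q = a then (if p = a then G a a else 0) else (0::real))"
    by simp
  then show ?thesis unfolding qf_def using \<open>a < n\<close> by (simp add: sum.delta)
qed

lemma bf_e: "a < n \<Longrightarrow> b < n \<Longrightarrow> bf n G (\<lambda>p. if p = a then 1 else 0) (\<lambda>p. if p = b then 1 else 0) = G a b"
proof -
  assume "a < n" "b < n"
  have "\<And>p q. (if p=a then 1 else 0)*G p q*(if q = b then 1 else 0) = (if q = b then (if p = a then G a b else 0) else (0::real))"
    by simp
  then show ?thesis unfolding bf_def using \<open>a < n\<close> \<open>b < n\<close> by (simp add: sum.delta)
qed

lemma uvec_e: "uvec (Some k) = (\<lambda>p. if p = k then 1 else 0)"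
  by (simp add: uvec_def fun_eq_iff)

lemma h0_e: "hvec N H (Some 0) = (\<lambda>p. if p = N+1 then 1 else 0)"
  by (simp add: hvec_def fun_eq_iff)

lemma tr_AR: "trprod N G (Defs.AR N) = G (N+1) (N+1)"
proof -
  have "\<And>p q. G p q * Defs.AR N q p = (if p = N+1 then (if q = N+1 then G (N+1) (N+1) else 0) else (0::real))"
    by (simp add: Defs.AR_def)
  then show ?thesis unfolding trprod_def by (simp only: sum.delta finite_lessThan) simp
qed

lemma h_decomp: "i \<le> N \<Longrightarrow> hvec N H (Some i) =
   (\<lambda>p. 1 * hvec N H (Some 0) p + (-1) * (\<Sum>k<i. H i k * uvec (Some k) p))"
proof -
  assume "i \<le> N"
  have "\<And>p. (\<Sum>k<i. H i k * uvec (Some k) p) = (\<Sum>k<i. if k = p then H i p else 0)"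
    by (rule sum.cong) (auto simp: uvec_def)
  then have "\<And>p. (\<Sum>k<i. H i k * uvec (Some k) p) = (if p < i then H i p else 0)"
    by (simp only: sum.delta finite_lessThan) simp
  then show ?thesis using \<open>i \<le> N\<close> by (auto simp: hvec_def fun_eq_iff)
qed

lemma feas_psd: "sdp_feasible \<mu> L R H N G f \<Longrightarrow> psd (N+2) G"
  by (simp add: sdp_feasible_def)

lemma feas_G00: "sdp_feasible \<mu> L R H N G f \<Longrightarrow> G (N+1) (N+1) \<le> R^2"
  using tr_AR[of N G] by (simp add: sdp_feasible_def)

lemma hbound:
  assumes mu: "0 \<le> \<mu>" "\<mu> < L"
  shows "i \<le> N \<Longrightarrow> \<exists>M. \<forall>G f. sdp_feasible \<mu> L R H N G f \<longrightarrow> qf (N+2) G (hvec N H (Some i)) \<le> M"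
proof (induction i rule: less_induct)
  case (less i)
  have "\<forall>k. \<exists>M. k < i \<longrightarrow> (\<forall>G f. sdp_feasible \<mu> L R H N G f \<longrightarrow> qf (N+2) G (hvec N H (Some k)) \<le> M)"
    using less by auto
  then obtain Mf where Mf: "\<And>k G f. k < i \<Longrightarrow> sdp_feasible \<mu> L R H N G f \<Longrightarrow> qf (N+2) G (hvec N H (Some k)) \<le> Mf k"
    by metis
  show ?case
  proof (intro exI allI impI)
    fix G f assume feas: "sdp_feasible \<mu> L R H N G f"
    have psd: "psd (N+2) G" using feas by (rule feas_psd)
    define s where "s = (\<lambda>p. \<Sum>k<i. H i k * uvec (Some k) p)"
    have "qf (N+2) G (hvec N H (Some i)) = qf (N+2) G (\<lambda>p. hvec N H (Some 0) p + (-1) * s p)"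
      using h_decomp[OF less.prems] by (simp add: s_def)
    also have "\<dots> \<le> 2 * qf (N+2) G (hvec N H (Some 0)) + 2 * qf (N+2) G (\<lambda>p. (-1) * s p)"
      by (rule qf_add_le[OF psd])
    also have "\<dots> = 2 * G (N+1) (N+1) + 2 * qf (N+2) G s"
      using qf_scale[of "N+2" G "-1" s] by (simp add: h0_e qf_e)
    also have "\<dots> \<le> 2 * R^2 + 2 * (2^i * (\<Sum>k<i. (H i k)^2 * ((L+\<mu>)^2 * Mf k)))"
    proof -
      have "qf (N+2) G s \<le> 2^i * (\<Sum>k<i. qf (N+2) G (\<lambda>p. H i k * uvec (Some k) p))"
        unfolding s_def by (rule qf_sum[OF psd])
      also have "\<dots> \<le> 2^i * (\<Sum>k<i. (H i k)^2 * ((L+\<mu>)^2 * Mf k))"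
      proof (rule mult_left_mono[OF sum_mono])
        fix k assume k: "k \<in> {..<i}"
        have "qf (N+2) G (uvec (Some k)) \<le> (L+\<mu>)^2 * qf (N+2) G (hvec N H (Some k))"
          using key[OF feas mu, of k] k less.prems by auto
        also have "\<dots> \<le> (L+\<mu>)^2 * Mf k"
          using Mf[of k G f] k feas by (intro mult_left_mono) auto
        finally show "qf (N+2) G (\<lambda>p. H i k * uvec (Some k) p) \<le> (H i k)^2 * ((L+\<mu>)^2 * Mf k)"
          unfolding qf_scale by (intro mult_left_mono) auto
      qed simp
      finally show ?thesis using feas_G00[OF feas] by linarith
    qed
    finally show "qf (N+2) G (hvec N H (Some i)) \<le> 2 * R^2 + 2 * (2^i * (\<Sum>k<i. (H i k)^2 * ((L+\<mu>)^2 * Mf k)))" .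
  qed
qed

lemma diag_bound:
  assumes mu: "0 \<le> \<mu>" "\<mu> < L" and p: "p < N+2"
  shows "\<exists>D. \<forall>G f. sdp_feasible \<mu> L R H N G f \<longrightarrow> G p p \<le> D \<and> (p \<le> N \<longrightarrow> \<bar>f p\<bar> \<le> D)"
proof (cases "p \<le> N")
  case True
  obtain M where M: "\<And>G f. sdp_feasible \<mu> L R H N G f \<Longrightarrow> qf (N+2) G (hvec N H (Some p)) \<le> M"
    using hbound[OF mu True] by blast
  show ?thesis
  proof (intro exI allI impI conjI)
    fix G f assume feas: "sdp_feasible \<mu> L R H N G f"
    have k: "0 \<le> f p" "f p \<le> L/2 * qf (N+2) G (hvec N H (Some p))"
      "qf (N+2) G (uvec (Some p)) \<le> (L+\<mu>)^2 * qf (N+2) G (hvec N H (Some p))"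
      using key[OF feas mu True] by auto
    have Mp: "qf (N+2) G (hvec N H (Some p)) \<le> \<bar>M\<bar>" using M[OF feas] by linarith
    have Gp: "G p p = qf (N+2) G (uvec (Some p))" using p by (simp add: uvec_e qf_e)
    have a: "(L+\<mu>)^2 * qf (N+2) G (hvec N H (Some p)) \<le> (L+\<mu>)^2 * \<bar>M\<bar>"
      using Mp by (intro mult_left_mono) auto
    have b: "L/2 * qf (N+2) G (hvec N H (Some p)) \<le> L * \<bar>M\<bar>"
    proof -
      have "L/2 * qf (N+2) G (hvec N H (Some p)) \<le> L/2 * \<bar>M\<bar>" using Mp mu by (intro mult_left_mono) auto
      also have "\<dots> \<le> L * \<bar>M\<bar>" using mu by (intro mult_right_mono) auto
      finally show ?thesis .
    qed
    have c: "0 \<le> L * \<bar>M\<bar>" "0 \<le> (L+\<mu>)^2 * \<bar>M\<bar>" using mu by auto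
    show "G p p \<le> (L+\<mu>)^2 * \<bar>M\<bar> + L * \<bar>M\<bar>" using Gp k a c by linarith
    show "\<bar>f p\<bar> \<le> (L+\<mu>)^2 * \<bar>M\<bar> + L * \<bar>M\<bar>" using k b c by linarith
  qed
next
  case False
  then have "p = N+1" using p by simp
  then show ?thesis using feas_G00 False by blast
qed

lemma all_bound:
  assumes mu: "0 \<le> \<mu>" "\<mu> < L"
  shows "\<exists>B\<ge>0. \<forall>G f. sdp_feasible \<mu> L R H N G f \<longrightarrow>
     (\<forall>p<N+2. \<forall>q<N+2. \<bar>G p q\<bar> \<le> B) \<and> (\<forall>i\<le>N. \<bar>f i\<bar> \<le> B)"
proof -
  have "\<forall>p. \<exists>D. p < N+2 \<longrightarrow> (\<forall>G f. sdp_feasible \<mu> L R H N G f \<longrightarrow> G p p \<le> D \<and> (p \<le> N \<longrightarrow> \<bar>f p\<bar> \<le> D))"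
    using diag_bound[OF mu] by blast
  then obtain Df where Df: "\<And>p G f. p < N+2 \<Longrightarrow> sdp_feasible \<mu> L R H N G f \<Longrightarrow> G p p \<le> Df p \<and> (p \<le> N \<longrightarrow> \<bar>f p\<bar> \<le> Df p)"
    by metis
  define B where "B = (\<Sum>p<N+2. \<bar>Df p\<bar>)"
  have DB: "\<And>p. p < N+2 \<Longrightarrow> Df p \<le> B"
  proof -
    fix p assume "p < N+2"
    then have "\<bar>Df p\<bar> \<le> B" unfolding B_def
      by (intro member_le_sum) auto
    then show "Df p \<le> B" by linarith
  qed
  show ?thesis
  proof (intro exI conjI allI impI)
    show "0 \<le> B" unfolding B_def by (intro sum_nonneg) auto
    fix G f assume feas: "sdp_feasible \<mu> L R H N G f"
    have psd: "psd (N+2) G" using feas by (rule feas_psd)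
    then have sym: "symm (N+2) G" by (simp add: psd_def)
    have dg: "\<And>p. p < N+2 \<Longrightarrow> G p p \<le> B" using Df[OF _ feas] DB by (meson order_trans)
    show "\<bar>f i\<bar> \<le> B" if "i \<le> N" for i using Df[OF _ feas, of i] DB[of i] that by auto
    fix p q assume pq: "p < N+2" "q < N+2"
    have G2: "G q p = G p q" using sym pq by (simp add: symm_def)
    have "\<And>c. 0 \<le> qf (N+2) G (\<lambda>r. 1 * (if r = p then 1 else 0) + c * (if r = q then 1 else 0))"
      using psd psd_qf by blast
    then have "\<And>c. 0 \<le> G p p + c * G p q + c * G q p + c^2 * G q q"
      unfolding qf_expand using pq by (simp add: qf_e bf_e)
    from this[of 1] this[of "-1"] have "0 \<le> G p p + 2 * G p q + G q q" "0 \<le> G p p - 2 * G p q + G q q"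
      using G2 by auto
    then show "\<bar>G p q\<bar> \<le> B" using dg[OF pq(1)] dg[OF pq(2)] by linarith
  qed
qed



lemma cont_G[continuous_intros]: "continuous_on S (\<lambda>z::(nat\<Rightarrow>nat\<Rightarrow>real)\<times>(nat\<Rightarrow>real). fst z p q)"
proof -
  have "continuous_on S (\<lambda>z::(nat\<Rightarrow>nat\<Rightarrow>real)\<times>(nat\<Rightarrow>real). fst z p)"
    by (rule continuous_on_product_then_coordinatewise, rule continuous_on_fst, rule continuous_on_id)
  then show ?thesis by (rule continuous_on_product_then_coordinatewise)
qed

lemma cont_f[continuous_intros]: "continuous_on S (\<lambda>z::(nat\<Rightarrow>nat\<Rightarrow>real)\<times>(nat\<Rightarrow>real). snd z i)"
  by (rule continuous_on_product_then_coordinatewise, rule continuous_on_snd, rule continuous_on_id)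

lemma compact_PiE_UNIV:
  assumes "\<And>i. compact (S i)"
  shows "compact (PiE UNIV S :: ('a \<Rightarrow> 'b::topological_space) set)"
proof -
  have "compactin (product_topology (\<lambda>i. euclidean) UNIV) (PiE UNIV S)"
    using assms by (auto simp: compactin_PiE)
  then show ?thesis by (simp add: euclidean_product_topology)
qed

lemma cont_tr: "continuous_on UNIV (\<lambda>z::(nat\<Rightarrow>nat\<Rightarrow>real)\<times>(nat\<Rightarrow>real). trprod N (fst z) X)"
  unfolding trprod_def by (intro continuous_intros)

lemma cont_tr2: "continuous_on UNIV (\<lambda>z::(nat\<Rightarrow>nat\<Rightarrow>real)\<times>(nat\<Rightarrow>real). trprod N C (fst z))"
  unfolding trprod_def by (intro continuous_intros)

lemma cont_fval: "continuous_on UNIV (\<lambda>z::(nat\<Rightarrow>nat\<Rightarrow>real)\<times>(nat\<Rightarrow>real). fval (snd z) j)"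
  by (cases j) (simp_all add: fval_def continuous_intros)

lemma closed_feas: "closed {z. sdp_feasible \<mu> L R H N (fst z) (snd z)}"
proof -
  have "{z. sdp_feasible \<mu> L R H N (fst z) (snd z)} =
    {z. symm (N+2) (fst z)} \<inter> (\<Inter>x. {z. 0 \<le> (\<Sum>p<N+2. \<Sum>q<N+2. x p * fst z p q * x q)}) \<inter>
    (\<Inter>i\<in>idx N. \<Inter>j\<in>idx N. {z. fval (snd z) j - fval (snd z) i + trprod N (fst z) (Amat \<mu> L N H i j) \<le> 0})
    \<inter> {z. trprod N (fst z) (Defs.AR N) \<le> R^2}"
    by (auto simp: sdp_feasible_def psd_def)
  moreover have "closed {z::(nat\<Rightarrow>nat\<Rightarrow>real)\<times>(nat\<Rightarrow>real). symm (N+2) (fst z)}"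
    unfolding symm_def by (intro closed_Collect_all closed_Collect_imp closed_Collect_eq) (auto intro!: continuous_intros)
  moreover have "closed {z::(nat\<Rightarrow>nat\<Rightarrow>real)\<times>(nat\<Rightarrow>real). 0 \<le> (\<Sum>p<N+2. \<Sum>q<N+2. x p * fst z p q * x q)}" for x
    by (intro closed_Collect_le) (auto intro!: continuous_intros)
  moreover have "closed {z::(nat\<Rightarrow>nat\<Rightarrow>real)\<times>(nat\<Rightarrow>real). fval (snd z) j - fval (snd z) i + trprod N (fst z) (Amat \<mu> L N H i j) \<le> 0}" for i j
    by (intro closed_Collect_le continuous_on_add continuous_on_diff cont_fval cont_tr continuous_on_const)
  moreover have "closed {z::(nat\<Rightarrow>nat\<Rightarrow>real)\<times>(nat\<Rightarrow>real). trprod N (fst z) (Defs.AR N) \<le> R^2}"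
    by (intro closed_Collect_le cont_tr continuous_on_const)
  ultimately show ?thesis by (auto intro!: closed_Int closed_INT)
qed

lemma trunc:
  assumes G: "\<forall>p<N+2. \<forall>q<N+2. G p q = G' p q" and f: "\<forall>i\<le>N. f i = f' i"
  shows "sdp_feasible \<mu> L R H N G f = sdp_feasible \<mu> L R H N G' f'"
    "sdp_obj N b C G f = sdp_obj N b C G' f'"
proof -
  have tr: "trprod N G X = trprod N G' X" for X unfolding trprod_def using G
    by (intro sum.cong refl) auto
  have tr2: "trprod N C G = trprod N C G'" unfolding trprod_def using G
    by (intro sum.cong refl) auto
  have sy: "symm (N+2) G = symm (N+2) G'" unfolding symm_def using G by auto
  have qq: "(\<Sum>p<N+2. \<Sum>q<N+2. x p * G p q * x q) = (\<Sum>p<N+2. \<Sum>q<N+2. x p * G' p q * x q)" for x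
    using G by (intro sum.cong refl) auto
  have ps: "psd (N+2) G = psd (N+2) G'" unfolding psd_def using sy qq by simp
  have fv: "j \<in> idx N \<Longrightarrow> fval f j = fval f' j" for j
    using f by (cases j) (auto simp: idx_def fval_def)
  show "sdp_feasible \<mu> L R H N G f = sdp_feasible \<mu> L R H N G' f'"
    unfolding sdp_feasible_def ps tr using fv by auto
  show "sdp_obj N b C G f = sdp_obj N b C G' f'"
  proof -
    have "(\<Sum>i\<le>N. b i * f i) = (\<Sum>i\<le>N. b i * f' i)" using f by (intro sum.cong) auto
    then show ?thesis unfolding sdp_obj_def tr2 by simp
  qed
qed

theorem proposition1:
  fixes \<mu> L R :: real and N :: nat and H :: "nat \<Rightarrow> nat \<Rightarrow> real"
    and b :: "nat \<Rightarrow> real" and C :: "nat \<Rightarrow> nat \<Rightarrow> real"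
  assumes "0 \<le> \<mu>" and "\<mu> < L" and "N \<ge> 1" and "R \<ge> 0"
    and "\<forall>i\<in>{1..N}. \<forall>k<N. i \<le> k \<longrightarrow> H i k = 0"
    and "symm (N + 2) C"
  shows "\<exists>G f. sdp_feasible \<mu> L R H N G f \<and>
           (\<forall>G' f'. sdp_feasible \<mu> L R H N G' f' \<longrightarrow>
               sdp_obj N b C G' f' \<le> sdp_obj N b C G f)"
proof -
  obtain B where B0: "B \<ge> 0" and Bb: "\<And>G f. sdp_feasible \<mu> L R H N G f \<Longrightarrow>
     (\<forall>p<N+2. \<forall>q<N+2. \<bar>G p q\<bar> \<le> B) \<and> (\<forall>i\<le>N. \<bar>f i\<bar> \<le> B)"
    using all_bound[OF assms(1,2), of R H N] by blast
  define K :: "((nat\<Rightarrow>nat\<Rightarrow>real)\<times>(nat\<Rightarrow>real)) set" where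
    "K = (PiE UNIV (\<lambda>p. PiE UNIV (\<lambda>q. if p < N+2 \<and> q < N+2 then {-B..B} else {0})))
        \<times> PiE UNIV (\<lambda>i. if i \<le> N then {-B..B} else {0})"
  define F where "F = {z::(nat\<Rightarrow>nat\<Rightarrow>real)\<times>(nat\<Rightarrow>real). sdp_feasible \<mu> L R H N (fst z) (snd z)}"
  have cK: "compact K" unfolding K_def
    by (intro compact_Times compact_PiE_UNIV) auto
  have cS: "compact (F \<inter> K)" unfolding F_def
    using compact_Int_closed[OF cK closed_feas] by (simp add: Int_commute)
  have z0: "((\<lambda>p q. 0), (\<lambda>i. 0)) \<in> F \<inter> K"
    using assms(4) B0 by (auto simp: F_def K_def sdp_feasible_def psd_def symm_def trprod_def fval_def PiE_iff split: option.splits)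
  have cont: "continuous_on (F \<inter> K) (\<lambda>z. sdp_obj N b C (fst z) (snd z))"
    unfolding sdp_obj_def trprod_def by (intro continuous_intros)
  obtain zm where zm: "zm \<in> F \<inter> K" and zmax: "\<And>y. y \<in> F \<inter> K \<Longrightarrow> sdp_obj N b C (fst y) (snd y) \<le> sdp_obj N b C (fst zm) (snd zm)"
    using continuous_attains_sup[OF cS _ cont] z0 by blast
  show ?thesis
  proof (intro exI conjI allI impI)
    show "sdp_feasible \<mu> L R H N (fst zm) (snd zm)" using zm by (simp add: F_def)
    fix G' f' assume feas: "sdp_feasible \<mu> L R H N G' f'"
    define G'' where "G'' = (\<lambda>p q. if p < N+2 \<and> q < N+2 then G' p q else 0)"
    define f'' where "f'' = (\<lambda>i. if i \<le> N then f' i else 0)"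
    have e1: "\<forall>p<N+2. \<forall>q<N+2. G'' p q = G' p q" "\<forall>i\<le>N. f'' i = f' i"
      by (auto simp: G''_def f''_def)
    have feas'': "sdp_feasible \<mu> L R H N G'' f''" using trunc(1)[OF e1] feas by simp
    have "(G'', f'') \<in> K" using Bb[OF feas] by (auto simp: K_def G''_def f''_def PiE_iff abs_le_iff; fastforce)
    then have "(G'', f'') \<in> F \<inter> K" using feas'' by (simp add: F_def)
    then have "sdp_obj N b C G'' f'' \<le> sdp_obj N b C (fst zm) (snd zm)" using zmax by fastforce
    then show "sdp_obj N b C G' f' \<le> sdp_obj N b C (fst zm) (snd zm)" using trunc(2)[OF e1] by simp
  qed
qed

end
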